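(* If the bounded plane domain $D$ has rotational symmetry of order $N\ge3$ and $T$ is an invertible $2\times2$ real matrix, then \[ \frac{I(TD)}{A(TD)^2}=\frac{I(T^{-1}D)}{A(T^{-1}D)^2}, \] and the same identity holds with $T^{-\dagger}D$ (the image under the inverse transpose) in place of $T^{-1}D$.
   Context: Rotational symmetry of order $N$ means invariance under rotation by $2\pi/N$ about some point. $A$ is area; $I(\Omega)=\int_\Omega|x-\bar x|^2dx$ the moment of inertia about the centroid $\bar x$. *)

theory Defs
  imports "HOL-Analysis.Analysis"
begin

definition area :: "(real^2) set \<Rightarrow> real" where
  "area \<Omega> = measure lebesgue \<Omega>"

definition centroid :: "(real^2) set \<Rightarrow> real^2" where
  "centroid \<Omega> = (1 / area \<Omega>) *\<^sub>R integral \<Omega> (\<lambda>x. x)"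

definition inertia :: "(real^2) set \<Rightarrow> real" where
  "inertia \<Omega> = integral \<Omega> (\<lambda>x. (norm (x - centroid \<Omega>))\<^sup>2)"

definition rot_mat :: "real \<Rightarrow> real^2^2" where
  "rot_mat t = vector [vector [cos t, - sin t], vector [sin t, cos t]]"

definition bounded_domain :: "(real^2) set \<Rightarrow> bool" where
  "bounded_domain D \<longleftrightarrow> D \<noteq> {} \<and> open D \<and> connected D \<and> bounded D"

definition rot_symmetric :: "nat \<Rightarrow> (real^2) set \<Rightarrow> bool" where
  "rot_symmetric N D \<longleftrightarrow>
     (\<exists>c. (\<lambda>x. c + rot_mat (2 * pi / real N) *v (x - c)) ` D = D)"

end

theory Submission
  imports Defs
begin

lemma abs_int_cont:
  fixes f :: "real^2 \<Rightarrow> 'b::euclidean_space"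
  assumes "bounded D" "open D" "continuous_on UNIV f"
  shows "f absolutely_integrable_on D"
proof -
  obtain a b where ab: "D \<subseteq> cbox a b"
    using assms(1) bounded_subset_cbox_symmetric by blast
  have "f absolutely_integrable_on cbox a b"
    by (rule absolutely_integrable_continuous) (use assms(3) continuous_on_subset in blast)
  moreover have "D \<in> sets lebesgue"
    using assms lmeasurable_open fmeasurableD by blast
  ultimately show ?thesis using ab set_integrable_subset by blast
qed

lemma cov_vec:
  fixes f :: "real^2 \<Rightarrow> real^'n" and g :: "real^2 \<Rightarrow> real^2"
  assumes "D \<in> sets lebesgue" "inj_on g D"
    "\<And>x. x \<in> D \<Longrightarrow> (g has_derivative (\<lambda>h. M *v h)) (at x within D)"
    "(\<lambda>x. f (g x)) absolutely_integrable_on D"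
  shows "f absolutely_integrable_on (g ` D) \<and> integral (g ` D) f = \<bar>det M\<bar> *\<^sub>R integral D (\<lambda>x. f (g x))"
proof -
  have "(\<lambda>x. \<bar>det (matrix (\<lambda>h. M *v h))\<bar> *\<^sub>R f (g x)) absolutely_integrable_on D \<and>
           integral D (\<lambda>x. \<bar>det (matrix (\<lambda>h. M *v h))\<bar> *\<^sub>R f(g x)) = \<bar>det M\<bar> *\<^sub>R integral D (\<lambda>x. f (g x))"
    using assms(4) by (simp add: absolutely_integrable_on_scaleR_iff)
  then show ?thesis
    using has_absolute_integral_change_of_variables[OF assms(1), of g "\<lambda>_ h. M *v h"] assms(2,3)
    by blast
qed

lemma cov_real:
  fixes f :: "real^2 \<Rightarrow> real" and g :: "real^2 \<Rightarrow> real^2"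
  assumes "D \<in> sets lebesgue" "inj_on g D"
    "\<And>x. x \<in> D \<Longrightarrow> (g has_derivative (\<lambda>h. M *v h)) (at x within D)"
    "(\<lambda>x. f (g x)) absolutely_integrable_on D"
  shows "integral (g ` D) f = \<bar>det M\<bar> * integral D (\<lambda>x. f (g x))"
proof -
  let ?F = "\<lambda>x. f x *\<^sub>R (1::real^1)"
  have "(\<lambda>x. ?F (g x)) absolutely_integrable_on D"
    using assms(4) by (rule absolutely_integrable_scaleR_right)
  from cov_vec[OF assms(1-3) this]
  have 1: "integral (g ` D) ?F = \<bar>det M\<bar> *\<^sub>R integral D (\<lambda>x. ?F (g x))"
    and 2: "?F integrable_on g ` D"
    using set_lebesgue_integral_eq_integral(1) by blast+
  have 3: "(\<lambda>x. f (g x)) integrable_on D"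
    using assms(4) set_lebesgue_integral_eq_integral(1) by blast
  have "integral (g ` D) f = integral (g ` D) (\<lambda>x. ?F x $ 1)" by simp
  also have "\<dots> = integral (g ` D) ?F $ 1"
    using 2 by (rule integral_component_eq_cart)
  also have "\<dots> = \<bar>det M\<bar> * integral D (\<lambda>x. ?F (g x)) $ 1"
    using 1 by simp
  also have "integral D (\<lambda>x. ?F (g x)) $ 1 = integral D (\<lambda>x. ?F (g x) $ 1)"
    using integrable_on_scaleR_left[OF 3] by (rule integral_component_eq_cart[symmetric])
  finally show ?thesis by simp
qed


lemma area_pos:
  assumes "bounded D" "open D" "D \<noteq> {}"
  shows "area D > 0"
proof -
  have L: "D \<in> lmeasurable" using assms lmeasurable_open by blast
  have "\<not> negligible D" using assms open_not_negligible by blast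
  then have "measure lebesgue D \<noteq> 0" using negligible_iff_measure0[OF L] by blast
  then show ?thesis unfolding area_def by (simp add: zero_less_measure_iff)
qed

lemma int_comb:
  fixes f1 f2 f3 :: "real^2 \<Rightarrow> real"
  assumes "f1 integrable_on D" "f2 integrable_on D" "f3 integrable_on D"
  shows "integral D (\<lambda>y. a * f1 y + b * f2 y + c * f3 y)
         = a * integral D f1 + b * integral D f2 + c * integral D f3"
proof -
  have i1: "(\<lambda>y. a * f1 y) integrable_on D" using integrable_cmul[OF assms(1), of a] by simp
  have i2: "(\<lambda>y. b * f2 y) integrable_on D" using integrable_cmul[OF assms(2), of b] by simp
  have i3: "(\<lambda>y. c * f3 y) integrable_on D" using integrable_cmul[OF assms(3), of c] by simp
  have i12: "(\<lambda>y. a * f1 y + b * f2 y) integrable_on D" by (rule integrable_add[OF i1 i2])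
  have "integral D (\<lambda>y. a * f1 y + b * f2 y + c * f3 y)
      = integral D (\<lambda>y. a * f1 y + b * f2 y) + integral D (\<lambda>y. c * f3 y)"
    by (rule integral_add[OF i12 i3])
  also have "integral D (\<lambda>y. a * f1 y + b * f2 y) = integral D (\<lambda>y. a * f1 y) + integral D (\<lambda>y. b * f2 y)"
    by (rule integral_add[OF i1 i2])
  finally show ?thesis by simp
qed

lemma cont_mv: "continuous_on UNIV (\<lambda>x. (M::real^2^2) *v x)"
  by (simp add: linear_continuous_on linear_linear matrix_vector_mul_linear)

lemma norm_mv:
  fixes M :: "real^2^2"
  shows "(norm (M *v y - M *v c))\<^sup>2 =
    (M$1$1^2 + M$2$1^2) * (y$1 - c$1)^2 + 2 * (M$1$1*M$1$2 + M$2$1*M$2$2) * ((y$1 - c$1) * (y$2 - c$2))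
    + (M$1$2^2 + M$2$2^2) * (y$2 - c$2)^2"
  unfolding power2_norm_eq_inner
  by (simp add: inner_vec_def sum_2 matrix_vector_mult_def) (simp add: power2_eq_square algebra_simps)

lemma image_formulas:
  fixes D :: "(real^2) set" and M :: "real^2^2"
  assumes "bounded D" "open D" "det M \<noteq> 0"
  defines "c \<equiv> centroid D"
  shows "area ((\<lambda>x. M *v x) ` D) = \<bar>det M\<bar> * area D"
    and "centroid ((\<lambda>x. M *v x) ` D) = M *v c"
    and "inertia ((\<lambda>x. M *v x) ` D) = \<bar>det M\<bar> *
      ((M$1$1^2 + M$2$1^2) * integral D (\<lambda>y. (y$1 - c$1)^2)
       + 2 * (M$1$1*M$1$2 + M$2$1*M$2$2) * integral D (\<lambda>y. (y$1 - c$1) * (y$2 - c$2))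
       + (M$1$2^2 + M$2$2^2) * integral D (\<lambda>y. (y$2 - c$2)^2))"
proof -
  let ?g = "\<lambda>x. M *v x"
  have L: "D \<in> lmeasurable" using assms lmeasurable_open by blast
  have S: "D \<in> sets lebesgue" using L fmeasurableD by blast
  have inj: "inj_on ?g D"
    using inj_matrix_vector_mult[of M] assms(3) invertible_det_nz inj_on_subset by blast
  have der: "\<And>x. x \<in> D \<Longrightarrow> (?g has_derivative (\<lambda>h. M *v h)) (at x within D)"
    by (simp add: linear_imp_has_derivative)
  show A: "area (?g ` D) = \<bar>det M\<bar> * area D"
    unfolding area_def using measure_linear_image[OF matrix_vector_mul_linear L, of M] by simp
  have ci: "(\<lambda>x. ?g x) absolutely_integrable_on D"
    by (rule abs_int_cont[OF assms(1,2) cont_mv])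
  have "integral (?g ` D) (\<lambda>x. x) = \<bar>det M\<bar> *\<^sub>R integral D ?g"
    using cov_vec[OF S inj der, of "\<lambda>x. x"] ci by simp
  also have "integral D ?g = M *v integral D (\<lambda>x. x)"
  proof -
    have "(\<lambda>x. x) integrable_on D"
      using abs_int_cont[OF assms(1,2), of "\<lambda>x. x"] set_lebesgue_integral_eq_integral(1)
      by (simp add: continuous_on_id)
    from integral_linear[OF this, of ?g]
    show ?thesis by (simp add: o_def linear_linear[symmetric] matrix_vector_mul_linear)
  qed
  finally have I: "integral (?g ` D) (\<lambda>x. x) = \<bar>det M\<bar> *\<^sub>R (M *v integral D (\<lambda>x. x))" .
  show C: "centroid (?g ` D) = M *v c"
    unfolding centroid_def A I c_def
    using assms(3) by (simp add: matrix_vector_mult_scaleR scaleR_matrix_vector_assoc)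
  show "inertia (?g ` D) = \<bar>det M\<bar> *
      ((M$1$1^2 + M$2$1^2) * integral D (\<lambda>y. (y$1 - c$1)^2)
       + 2 * (M$1$1*M$1$2 + M$2$1*M$2$2) * integral D (\<lambda>y. (y$1 - c$1) * (y$2 - c$2))
       + (M$1$2^2 + M$2$2^2) * integral D (\<lambda>y. (y$2 - c$2)^2))"
  proof -
    have cf: "continuous_on UNIV (\<lambda>y. (norm (M *v y - M *v c))\<^sup>2)"
      by (intro continuous_intros cont_mv)
    have ai: "(\<lambda>y. (norm (?g y - M *v c))\<^sup>2) absolutely_integrable_on D"
      by (rule abs_int_cont[OF assms(1,2) cf])
    have "inertia (?g ` D) = integral (?g ` D) (\<lambda>x. (norm (x - M *v c))\<^sup>2)"
      unfolding inertia_def C ..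
    also have "\<dots> = \<bar>det M\<bar> * integral D (\<lambda>y. (norm (?g y - M *v c))\<^sup>2)"
      by (rule cov_real[OF S inj der ai])
    also have "integral D (\<lambda>y. (norm (?g y - M *v c))\<^sup>2) = 
      ((M$1$1^2 + M$2$1^2) * integral D (\<lambda>y. (y$1 - c$1)^2)
       + 2 * (M$1$1*M$1$2 + M$2$1*M$2$2) * integral D (\<lambda>y. (y$1 - c$1) * (y$2 - c$2))
       + (M$1$2^2 + M$2$2^2) * integral D (\<lambda>y. (y$2 - c$2)^2))"
    proof -
      have i: "(\<lambda>y. (y$1 - c$1)^2) integrable_on D" "(\<lambda>y. (y$1 - c$1) * (y$2 - c$2)) integrable_on D"
         "(\<lambda>y. (y$2 - c$2)^2) integrable_on D"
        by (rule set_lebesgue_integral_eq_integral(1)[OF abs_int_cont[OF assms(1,2)]],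
            intro continuous_intros)+
      show ?thesis unfolding norm_mv by (rule int_comb[OF i])
    qed
    finally show ?thesis .
  qed
qed


lemma sym_moments:
  fixes D :: "(real^2) set"
  assumes bD: "bounded D" and oD: "open D" and neD: "D \<noteq> {}" and N: "N \<ge> 3"
    and sym: "rot_symmetric N D"
  defines "c \<equiv> centroid D"
  shows "integral D (\<lambda>y. (y$1 - c$1)^2) = integral D (\<lambda>y. (y$2 - c$2)^2)
       \<and> integral D (\<lambda>y. (y$1 - c$1) * (y$2 - c$2)) = 0"
proof -
  define \<theta> where "\<theta> = 2 * pi / real N"
  define R where "R = rot_mat \<theta>"
  define a where "a = cos \<theta>"
  define b where "b = sin \<theta>"
  obtain p where gD: "(\<lambda>x. p + R *v (x - p)) ` D = D"
    using sym unfolding rot_symmetric_def R_def \<theta>_def by blast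
  define g where "g = (\<lambda>x. p + R *v (x - p))"
  have gD': "g ` D = D" using gD g_def by simp
  have th0: "0 < \<theta>" using N by (simp add: \<theta>_def)
  have th1: "\<theta> < pi"
  proof -
    have "real N \<ge> 3" using N by simp
    then have "2 * pi / real N < pi" using pi_gt_zero by (simp add: field_simps)
    then show ?thesis by (simp add: \<theta>_def)
  qed
  have bpos: "b > 0" unfolding b_def using sin_gt_zero[OF th0 th1] .
  have pyth: "a^2 + b^2 = 1" unfolding a_def b_def by simp
  have R11: "R$1$1 = a" and R12: "R$1$2 = -b" and R21: "R$2$1 = b" and R22: "R$2$2 = a"
    by (simp_all add: R_def rot_mat_def a_def b_def)
  have detR: "det R = 1" using pyth by (simp add: det_2 R11 R12 R21 R22 power2_eq_square)
  have Rv1: "(R *v v)$1 = a * v$1 - b * v$2" and Rv2: "(R *v v)$2 = b * v$1 + a * v$2" for v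
    by (simp_all add: matrix_vector_mult_def sum_2 R11 R12 R21 R22)
  have L: "D \<in> lmeasurable" using bD oD lmeasurable_open by blast
  have S: "D \<in> sets lebesgue" using L fmeasurableD by blast
  have invR: "invertible R" unfolding invertible_det_nz using detR by simp
  have inj: "inj_on g D"
  proof
    fix x y assume "g x = g y"
    then have "R *v (x - p) = R *v (y - p)" by (simp add: g_def)
    then have "x - p = y - p" using inj_matrix_vector_mult[OF invR] by (meson injD)
    then show "x = y" by simp
  qed
  have geq: "g = (\<lambda>x. R *v x + (p - R *v p))"
    by (rule ext) (simp add: g_def matrix_vector_mult_diff_distrib algebra_simps)
  have der: "\<And>x. x \<in> D \<Longrightarrow> (g has_derivative (\<lambda>h. R *v h)) (at x within D)"
    unfolding geq
    by (rule has_derivative_add_const) (simp add: linear_imp_has_derivative)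
  have cg: "continuous_on UNIV g"
    unfolding geq by (intro continuous_intros cont_mv)
  have trr: "integral D h = integral D (\<lambda>x. h (g x))" if ch: "continuous_on UNIV h" for h :: "real^2 \<Rightarrow> real"
  proof -
    have "continuous_on UNIV (\<lambda>x. h (g x))"
      by (rule continuous_on_compose2[OF ch cg]) auto
    then have "(\<lambda>x. h (g x)) absolutely_integrable_on D" by (rule abs_int_cont[OF bD oD])
    from cov_real[OF S inj der this] show ?thesis using gD' detR by simp
  qed
  have trv: "integral D h = integral D (\<lambda>x. h (g x))" if ch: "continuous_on UNIV h" for h :: "real^2 \<Rightarrow> real^2"
  proof -
    have "continuous_on UNIV (\<lambda>x. h (g x))"
      by (rule continuous_on_compose2[OF ch cg]) auto
    then have "(\<lambda>x. h (g x)) absolutely_integrable_on D" by (rule abs_int_cont[OF bD oD])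
    from cov_vec[OF S inj der this] show ?thesis using gD' detR by simp
  qed
  define A where "A = area D"
  have Apos: "A > 0" unfolding A_def using area_pos[OF bD oD neD] .
  define s where "s = integral D (\<lambda>x. x)"
  have intid: "(\<lambda>x. x) integrable_on D"
    using abs_int_cont[OF bD oD, of "\<lambda>x. x"] set_lebesgue_integral_eq_integral(1)
    by (simp add: continuous_on_id)
  have int1: "(\<lambda>x. 1::real) integrable_on D"
    using L lmeasurable_iff_integrable_on by blast
  have intc: "integral D (\<lambda>x. q) = A *\<^sub>R q" for q :: "real^2"
  proof -
    have "((\<lambda>x. 1::real) has_integral A) D"
      using int1 lmeasure_integral[OF L] A_def area_def by (simp add: has_integral_integral)
    from has_integral_scaleR_left[OF this, of q] show ?thesis by (simp add: integral_unique)
  qed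
  have intcq: "(\<lambda>x. q) integrable_on D" for q :: "real^2"
    using integrable_on_scaleR_left[OF int1, of q] by simp
  have "s = integral D (\<lambda>x. g x)" unfolding s_def by (rule trv) (simp add: continuous_on_id)
  also have "\<dots> = integral D (\<lambda>x. p) + integral D (\<lambda>x. R *v (x - p))"
    unfolding g_def
  proof (rule integral_add[OF intcq])
    show "(\<lambda>x. R *v (x - p)) integrable_on D"
    proof -
      have "continuous_on UNIV (\<lambda>x. R *v x - R *v p)"
        by (rule continuous_on_diff[OF cont_mv continuous_on_const])
      then have "continuous_on UNIV (\<lambda>x. R *v (x - p))"
        by (simp add: matrix_vector_mult_diff_distrib)
      then show ?thesis
        using abs_int_cont[OF bD oD] set_lebesgue_integral_eq_integral(1) by blast
    qed
  qed
  also have "integral D (\<lambda>x. R *v (x - p)) = R *v integral D (\<lambda>x. x - p)"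
  proof -
    have "(\<lambda>x. x - p) integrable_on D" using integrable_diff[OF intid intcq] .
    from integral_linear[OF this, of "\<lambda>x. R *v x"] show ?thesis
      by (simp add: o_def linear_linear[symmetric] matrix_vector_mul_linear)
  qed
  also have "integral D (\<lambda>x. x - p) = s - A *\<^sub>R p"
    using integral_diff[OF intid intcq, of p] intc s_def by simp
  finally have seq0: "s = integral D (\<lambda>x. p) + R *v (s - A *\<^sub>R p)" .
  have seq: "s = A *\<^sub>R p + R *v (s - A *\<^sub>R p)" using seq0 unfolding intc .
  define w where "w = s - A *\<^sub>R p"
  have weq: "w = R *v w" using seq unfolding w_def by (simp add: algebra_simps)
  have e1: "w$1 = a * w$1 - b * w$2" using weq Rv1 by metis
  have e2: "w$2 = b * w$1 + a * w$2" using weq Rv2 by metis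
  have "w$1 * (2 - 2*a) = 0" using e1 e2 pyth by algebra
  moreover have "a < 1"
  proof -
    have "a^2 < 1" using pyth bpos by (smt (verit) zero_less_power)
    then show ?thesis by (smt (verit) one_le_power)
  qed
  ultimately have w1: "w$1 = 0" by simp
  then have "b * w$2 = 0" using e1 by simp
  then have w2: "w$2 = 0" using bpos by simp
  have "w = 0" using w1 w2 by (simp add: vec_eq_iff forall_2)
  then have "s = A *\<^sub>R p" unfolding w_def by simp
  then have cp: "c = p" unfolding c_def centroid_def s_def[symmetric] A_def[symmetric]
    using Apos by simp
  define m11 where "m11 = integral D (\<lambda>y. (y$1 - c$1)^2)"
  define m12 where "m12 = integral D (\<lambda>y. (y$1 - c$1) * (y$2 - c$2))"
  define m22 where "m22 = integral D (\<lambda>y. (y$2 - c$2)^2)"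
  have i: "(\<lambda>y. (y$1 - c$1)^2) integrable_on D" "(\<lambda>y. (y$1 - c$1) * (y$2 - c$2)) integrable_on D"
         "(\<lambda>y. (y$2 - c$2)^2) integrable_on D"
    by (rule set_lebesgue_integral_eq_integral(1)[OF abs_int_cont[OF bD oD]],
            intro continuous_intros)+
  have g1: "(g y)$1 - c$1 = a * (y$1 - c$1) - b * (y$2 - c$2)" for y
    using Rv1 by (simp add: g_def cp)
  have g2: "(g y)$2 - c$2 = b * (y$1 - c$1) + a * (y$2 - c$2)" for y
    using Rv2 by (simp add: g_def cp)
  have E1: "m11 = a^2 * m11 + (-2*a*b) * m12 + b^2 * m22"
  proof -
    have "m11 = integral D (\<lambda>y. ((g y)$1 - c$1)^2)"
      unfolding m11_def by (rule trr) (intro continuous_intros)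
    also have "\<dots> = integral D (\<lambda>y. a^2 * (y$1 - c$1)^2 + (-2*a*b) * ((y$1 - c$1) * (y$2 - c$2)) + b^2 * (y$2 - c$2)^2)"
      unfolding g1 by (simp add: power2_eq_square algebra_simps)
    also have "\<dots> = a^2 * m11 + (-2*a*b) * m12 + b^2 * m22"
      unfolding m11_def m12_def m22_def by (rule int_comb[OF i])
    finally show ?thesis .
  qed
  have E2: "m22 = b^2 * m11 + (2*a*b) * m12 + a^2 * m22"
  proof -
    have "m22 = integral D (\<lambda>y. ((g y)$2 - c$2)^2)"
      unfolding m22_def by (rule trr) (intro continuous_intros)
    also have "\<dots> = integral D (\<lambda>y. b^2 * (y$1 - c$1)^2 + (2*a*b) * ((y$1 - c$1) * (y$2 - c$2)) + a^2 * (y$2 - c$2)^2)"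
      unfolding g2 by (simp add: power2_eq_square algebra_simps)
    also have "\<dots> = b^2 * m11 + (2*a*b) * m12 + a^2 * m22"
      unfolding m11_def m12_def m22_def by (rule int_comb[OF i])
    finally show ?thesis .
  qed
  have E3: "m12 = (a*b) * m11 + (a^2 - b^2) * m12 + (-a*b) * m22"
  proof -
    have "m12 = integral D (\<lambda>y. ((g y)$1 - c$1) * ((g y)$2 - c$2))"
      unfolding m12_def by (rule trr) (intro continuous_intros)
    also have "\<dots> = integral D (\<lambda>y. (a*b) * (y$1 - c$1)^2 + (a^2 - b^2) * ((y$1 - c$1) * (y$2 - c$2)) + (-a*b) * (y$2 - c$2)^2)"
      unfolding g1 g2 by (simp add: power2_eq_square algebra_simps)
    also have "\<dots> = (a*b) * m11 + (a^2 - b^2) * m12 + (-a*b) * m22"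
      unfolding m11_def m12_def m22_def by (rule int_comb[OF i])
    finally show ?thesis .
  qed
  have h1: "b * (b * (m11 - m22) + 2 * a * m12) = 0" using E1 E2 pyth by algebra
  have h1': "b * (m11 - m22) + 2 * a * m12 = 0" using h1 bpos by simp
  have h2: "b * (2 * b * m12 - a * (m11 - m22)) = 0" using E3 pyth by algebra
  have h2': "2 * b * m12 - a * (m11 - m22) = 0" using h2 bpos by simp
  have d0: "m11 - m22 = 0" using h1' h2' pyth by algebra
  then have "b * m12 = 0" using h2' by simp
  then have "m12 = 0" using bpos by simp
  with d0 show ?thesis unfolding m11_def m12_def m22_def by simp
qed


lemma alg1: "(d::real) > 0 \<Longrightarrow> d*Q/(d*A)^2 = Q/(d*A^2)"
  by (simp add: power2_eq_square)
lemma alg3: "(k::real) > 0 \<Longrightarrow> m*S/(k*A^2) = m*(S/k^2)/((1/k)*A^2)"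
  by (simp add: power2_eq_square)
lemma alg2: "(e::real) \<noteq> 0 \<Longrightarrow> m*S/(\<bar>e\<bar>*A^2) = m*(S/e^2)/(\<bar>1/e\<bar>*A^2)"
proof -
  assume e: "e \<noteq> 0"
  have "m*(S/e^2)/(\<bar>1/e\<bar>*A^2) = m*(S/\<bar>e\<bar>^2)/((1/\<bar>e\<bar>)*A^2)" by simp
  then show ?thesis using alg3[of "\<bar>e\<bar>" m S A] e by simp
qed

lemma ratio_formula:
  fixes D :: "(real^2) set" and M :: "real^2^2"
  assumes "bounded D" "open D" "D \<noteq> {}" "N \<ge> 3" "rot_symmetric N D" "det M \<noteq> 0"
  shows "inertia ((\<lambda>x. M *v x) ` D) / (area ((\<lambda>x. M *v x) ` D))\<^sup>2
    = integral D (\<lambda>y. (y$1 - centroid D$1)^2) * (M$1$1^2 + M$2$1^2 + M$1$2^2 + M$2$2^2)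
      / (\<bar>det M\<bar> * (area D)^2)"
proof -
  define I1 where "I1 = integral D (\<lambda>y. (y$1 - centroid D$1)^2)"
  define I2 where "I2 = integral D (\<lambda>y. (y$2 - centroid D$2)^2)"
  define I3 where "I3 = integral D (\<lambda>y. (y$1 - centroid D$1) * (y$2 - centroid D$2))"
  have sm: "I2 = I1" "I3 = 0" using sym_moments[OF assms(1-5)] unfolding I1_def I2_def I3_def by auto
  note f = image_formulas[OF assms(1,2,6), folded I1_def I2_def I3_def]
  have "\<bar>det M\<bar> > 0" using assms(6) by simp
  then have "inertia ((\<lambda>x. M *v x) ` D) / (area ((\<lambda>x. M *v x) ` D))\<^sup>2
     = I1 * (M$1$1^2 + M$2$1^2 + M$1$2^2 + M$2$2^2) / (\<bar>det M\<bar> * (area D)^2)"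
    unfolding f(1) f(3) sm by (subst alg1) (auto simp: algebra_simps)
  then show ?thesis unfolding I1_def .
qed

lemma inv_entries:
  fixes T :: "real^2^2"
  assumes "invertible T"
  defines "X \<equiv> matrix_inv T"
  defines "\<delta> \<equiv> T$1$1 * T$2$2 - T$1$2 * T$2$1"
  shows "X$1$1 = T$2$2 / \<delta>" "X$1$2 = - T$1$2 / \<delta>" "X$2$1 = - T$2$1 / \<delta>" "X$2$2 = T$1$1 / \<delta>"
    "\<delta> \<noteq> 0"
proof -
  have "\<exists>A'. T ** A' = mat 1 \<and> A' ** T = mat 1" using assms(1) unfolding invertible_def .
  then have "T ** X = mat 1" unfolding X_def matrix_inv_def by (rule someI2_ex) blast
  then have e: "(T ** X)$1$1 = 1" "(T ** X)$1$2 = 0" "(T ** X)$2$1 = 0" "(T ** X)$2$2 = 1"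
    by (simp_all add: mat_def)
  then have e1: "T$1$1 * X$1$1 + T$1$2 * X$2$1 = 1" and e2: "T$1$1 * X$1$2 + T$1$2 * X$2$2 = 0"
    and e3: "T$2$1 * X$1$1 + T$2$2 * X$2$1 = 0" and e4: "T$2$1 * X$1$2 + T$2$2 * X$2$2 = 1"
    by (simp_all add: matrix_matrix_mult_def sum_2)
  show dn: "\<delta> \<noteq> 0" using assms(1) invertible_det_nz det_2 \<delta>_def by metis
  have "\<delta> * X$1$1 = T$2$2" using e1 e3 unfolding \<delta>_def by algebra
  then show "X$1$1 = T$2$2 / \<delta>" using dn by (simp add: field_simps)
  have "\<delta> * X$1$2 = - T$1$2" using e2 e4 unfolding \<delta>_def by algebra
  then show "X$1$2 = - T$1$2 / \<delta>" using dn by (simp add: field_simps)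
  have "\<delta> * X$2$1 = - T$2$1" using e1 e3 unfolding \<delta>_def by algebra
  then show "X$2$1 = - T$2$1 / \<delta>" using dn by (simp add: field_simps)
  have "\<delta> * X$2$2 = T$1$1" using e2 e4 unfolding \<delta>_def by algebra
  then show "X$2$2 = T$1$1 / \<delta>" using dn by (simp add: field_simps)
qed

theorem mainTheorem11:
  fixes D :: "(real^2) set" and T :: "real^2^2" and N :: nat
  assumes "bounded_domain D"
    and "N \<ge> 3"
    and "rot_symmetric N D"
    and "invertible T"
  shows "inertia ((\<lambda>x. T *v x) ` D) / (area ((\<lambda>x. T *v x) ` D))\<^sup>2
           = inertia ((\<lambda>x. matrix_inv T *v x) ` D) / (area ((\<lambda>x. matrix_inv T *v x) ` D))\<^sup>2
       \<and> inertia ((\<lambda>x. T *v x) ` D) / (area ((\<lambda>x. T *v x) ` D))\<^sup>2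
           = inertia ((\<lambda>x. transpose (matrix_inv T) *v x) ` D)
               / (area ((\<lambda>x. transpose (matrix_inv T) *v x) ` D))\<^sup>2"
proof -
  have bD: "bounded D" and oD: "open D" and nD: "D \<noteq> {}"
    using assms(1) unfolding bounded_domain_def by auto
  define X where "X = matrix_inv T"
  define \<delta> where "\<delta> = T$1$1 * T$2$2 - T$1$2 * T$2$1"
  note ie = inv_entries[OF assms(4), folded X_def \<delta>_def]
  have dT: "det T = \<delta>" by (simp add: det_2 \<delta>_def)
  have dX0: "det X = (T$1$1 * T$2$2 - T$1$2 * T$2$1) / (\<delta> * \<delta>)"
    unfolding det_2 ie(1-4) using ie(5) by (simp add: field_simps)
  have dX: "det X = 1 / \<delta>" using dX0 ie(5) unfolding \<delta>_def[symmetric] by simp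
  have dXt: "det (transpose X) = 1 / \<delta>" using dX by simp
  define m where "m = integral D (\<lambda>y. (y$1 - centroid D$1)^2)"
  define A where "A = area D"
  have Apos: "A > 0" unfolding A_def using area_pos[OF bD oD nD] .
  have r1: "inertia ((\<lambda>x. T *v x) ` D) / (area ((\<lambda>x. T *v x) ` D))\<^sup>2
     = m * (T$1$1^2 + T$2$1^2 + T$1$2^2 + T$2$2^2) / (\<bar>\<delta>\<bar> * A^2)"
    using ratio_formula[OF bD oD nD assms(2,3), of T] dT ie(5) unfolding m_def A_def by simp
  have r2: "inertia ((\<lambda>x. X *v x) ` D) / (area ((\<lambda>x. X *v x) ` D))\<^sup>2
     = m * (X$1$1^2 + X$2$1^2 + X$1$2^2 + X$2$2^2) / (\<bar>1/\<delta>\<bar> * A^2)"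
    using ratio_formula[OF bD oD nD assms(2,3), of X] dX ie(5) unfolding m_def A_def by simp
  have r3: "inertia ((\<lambda>x. transpose X *v x) ` D) / (area ((\<lambda>x. transpose X *v x) ` D))\<^sup>2
     = m * (X$1$1^2 + X$2$1^2 + X$1$2^2 + X$2$2^2) / (\<bar>1/\<delta>\<bar> * A^2)"
    using ratio_formula[OF bD oD nD assms(2,3), of "transpose X"] dXt ie(5) unfolding m_def A_def
    by (simp add: transpose_def add_ac)
  have key: "m * (T$1$1^2 + T$2$1^2 + T$1$2^2 + T$2$2^2) / (\<bar>\<delta>\<bar> * A^2)
      = m * (X$1$1^2 + X$2$1^2 + X$1$2^2 + X$2$2^2) / (\<bar>1/\<delta>\<bar> * A^2)"
  proof -
    have "X$1$1^2 + X$2$1^2 + X$1$2^2 + X$2$2^2 = (T$1$1^2 + T$2$1^2 + T$1$2^2 + T$2$2^2) / \<delta>^2"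
      unfolding ie(1-4) by (simp add: power_divide add_divide_distrib add_ac)
    then show ?thesis using alg2[OF ie(5)] by simp
  qed
  show ?thesis using r1 r2 r3 key unfolding X_def by simp
qed

end
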